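(* Fix a noise variance $\sigma_W^2>0$ and let $\lambda_\gamma(0,1)$ be the Gittins index (defined in the context) of an arm with standard normal prior $N(0,1)$. Then \[ \lambda_\gamma(0,1)\le \sqrt{2\log\left(\frac{1}{1-\gamma}\right)}+o(1)\quad\text{as } \gamma\to1. \]
   Context: One-armed Gaussian bandit: the arm has unknown quality $\theta\sim N(\mu,\sigma^2)$ (the prior), and conditional on $\theta$ the rewards $R_0,R_1,R_2,\ldots$ are i.i.d. $N(\theta,\sigma_W^2)$, where $\sigma_W^2>0$ is a fixed noise variance. Let $\mathcal{H}_t$ be the $\sigma$-algebra generated by $R_0,\ldots,R_{t-1}$ ($\mathcal{H}_0$ trivial). For a discount factor $\gamma\in(0,1)$ and a tax $\lambda\in\mathbb{R}$, define \[ V_\gamma^\lambda(\mu,\sigma)=\sup_{\tau\ge 1}\mathbb{E}\Big[\sum_{t=0}^{\tau}\gamma^t(\theta-\lambda)\Big], \] where the supremum is over stopping times $\tau\ge 1$ (possibly infinite) with respect to the filtration $(\mathcal{H}_t)_{t\ge0}$, and the expectation is under the model with prior $N(\mu,\sigma^2)$. The Gittins index is $\lambda_\gamma(\mu,\sigma^2)=\sup\{\lambda\in\mathbb{R} : V_\gamma^\lambda(\mu,\sigma)\ge 0\}$. Here $\mu=0$, $\sigma^2=1$. *)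

theory Defs
  imports "HOL-Probability.Probability"
begin

text \<open>Underlying probability space: an i.i.d. sequence Z 0, Z 1, ... of standard normals.
  The arm quality is theta = mu + sigma * Z 0 (so theta ~ N(mu, sigma^2)), and the rewards are
  R t = theta + sigma_W * Z (t+1), so that conditionally on theta they are i.i.d. N(theta, sigma_W^2).\<close>

definition bandit_space :: "(nat \<Rightarrow> real) measure" where
  "bandit_space = PiM UNIV (\<lambda>_. density lborel std_normal_density)"

definition arm_quality :: "real \<Rightarrow> real \<Rightarrow> (nat \<Rightarrow> real) \<Rightarrow> real" where
  "arm_quality \<mu> \<sigma> \<omega> = \<mu> + \<sigma> * \<omega> 0"

definition reward :: "real \<Rightarrow> real \<Rightarrow> real \<Rightarrow> nat \<Rightarrow> (nat \<Rightarrow> real) \<Rightarrow> real" where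
  "reward \<mu> \<sigma> \<sigma>W t \<omega> = arm_quality \<mu> \<sigma> \<omega> + \<sigma>W * \<omega> (Suc t)"

definition history :: "real \<Rightarrow> real \<Rightarrow> real \<Rightarrow> nat \<Rightarrow> (nat \<Rightarrow> real) measure" where
  "history \<mu> \<sigma> \<sigma>W t = vimage_algebra (space bandit_space)
      (\<lambda>\<omega>. restrict (\<lambda>i. reward \<mu> \<sigma> \<sigma>W i \<omega>) {..<t}) (PiM {..<t} (\<lambda>_. borel))"

definition admissible_stopping_time ::
  "real \<Rightarrow> real \<Rightarrow> real \<Rightarrow> ((nat \<Rightarrow> real) \<Rightarrow> enat) \<Rightarrow> bool" where
  "admissible_stopping_time \<mu> \<sigma> \<sigma>W \<tau> \<longleftrightarrow>
     (\<forall>\<omega>\<in>space bandit_space. 1 \<le> \<tau> \<omega>) \<and>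
     (\<forall>t::nat. {\<omega>\<in>space bandit_space. \<tau> \<omega> \<le> enat t} \<in> sets (history \<mu> \<sigma> \<sigma>W t))"

definition stopped_payoff ::
  "real \<Rightarrow> real \<Rightarrow> real \<Rightarrow> real \<Rightarrow> ((nat \<Rightarrow> real) \<Rightarrow> enat) \<Rightarrow> (nat \<Rightarrow> real) \<Rightarrow> real" where
  "stopped_payoff \<mu> \<sigma> \<gamma> tax \<tau> \<omega> =
     (\<Sum>t. if enat t \<le> \<tau> \<omega> then \<gamma> ^ t * (arm_quality \<mu> \<sigma> \<omega> - tax) else 0)"

definition gittins_value :: "real \<Rightarrow> real \<Rightarrow> real \<Rightarrow> real \<Rightarrow> real \<Rightarrow> real" where
  "gittins_value \<sigma>W \<gamma> tax \<mu> \<sigma> =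
     Sup ((\<lambda>\<tau>. integral\<^sup>L bandit_space (stopped_payoff \<mu> \<sigma> \<gamma> tax \<tau>)) `
          {\<tau>. admissible_stopping_time \<mu> \<sigma> \<sigma>W \<tau>})"

text \<open>Gittins index lambda_gamma(mu, sigma^2); sigma is the prior standard deviation.\<close>

definition gittins_index :: "real \<Rightarrow> real \<Rightarrow> real \<Rightarrow> real \<Rightarrow> real" where
  "gittins_index \<sigma>W \<gamma> \<mu> \<sigma> = Sup {tax. gittins_value \<sigma>W \<gamma> tax \<mu> \<sigma> \<ge> 0}"

end

theory Submission
  imports Defs
begin

abbreviation NN :: "real measure" where "NN \<equiv> density lborel std_normal_density"

lemma comp_meas[measurable]: "(\<lambda>\<omega>. \<omega> i) \<in> borel_measurable bandit_space"
proof -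
  have "(\<lambda>\<omega>. \<omega> i) \<in> measurable bandit_space NN"
    unfolding bandit_space_def by (rule measurable_component_singleton) simp
  moreover have "sets NN = sets borel" by simp
  ultimately show ?thesis using measurable_cong_sets[OF refl, of NN borel bandit_space] by simp
qed

lemma prob_NN: "prob_space NN" using prob_space_normal_density[of 1 0] by simp

lemma prob_bandit: "prob_space bandit_space"
  unfolding bandit_space_def
  using prob_NN by (intro prob_space_PiM) auto

lemma distr0: "distr bandit_space NN (\<lambda>\<omega>. \<omega> 0) = NN"
  unfolding bandit_space_def
  by (rule distr_PiM_component) (auto intro: prob_NN)

lemma transfer:
  assumes [measurable]: "g \<in> borel_measurable borel"
  shows "integrable bandit_space (\<lambda>\<omega>. g (\<omega> 0)) \<longleftrightarrow> integrable lborel (\<lambda>x. std_normal_density x * g x)"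
    and "integral\<^sup>L bandit_space (\<lambda>\<omega>. g (\<omega> 0)) = integral\<^sup>L lborel (\<lambda>x. std_normal_density x * g x)"
proof -
  have m: "(\<lambda>\<omega>. \<omega> 0) \<in> measurable bandit_space NN"
    unfolding bandit_space_def by (rule measurable_component_singleton) simp
  have "integrable bandit_space (\<lambda>\<omega>. g (\<omega> 0)) \<longleftrightarrow> integrable (distr bandit_space NN (\<lambda>\<omega>. \<omega> 0)) g"
    using m by (subst integrable_distr_eq) auto
  also have "\<dots> \<longleftrightarrow> integrable NN g" by (simp add: distr0)
  also have "\<dots> \<longleftrightarrow> integrable lborel (\<lambda>x. std_normal_density x * g x)"
    by (subst integrable_density) auto
  finally show "integrable bandit_space (\<lambda>\<omega>. g (\<omega> 0)) \<longleftrightarrow> integrable lborel (\<lambda>x. std_normal_density x * g x)" .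
  have "integral\<^sup>L bandit_space (\<lambda>\<omega>. g (\<omega> 0)) = integral\<^sup>L (distr bandit_space NN (\<lambda>\<omega>. \<omega> 0)) g"
    using m by (subst integral_distr) auto
  also have "\<dots> = integral\<^sup>L NN g" by (simp add: distr0)
  also have "\<dots> = integral\<^sup>L lborel (\<lambda>x. std_normal_density x * g x)"
    by (subst integral_density) auto
  finally show "integral\<^sup>L bandit_space (\<lambda>\<omega>. g (\<omega> 0)) = integral\<^sup>L lborel (\<lambda>x. std_normal_density x * g x)" .
qed

lemma mgf_pt: "std_normal_density x * exp (s * x) = exp (s^2/2) * normal_density s 1 x"
  by (simp add: normal_density_def std_normal_density_def exp_add[symmetric] power2_eq_square algebra_simps; simp add: field_simps)

lemma mgf:
  shows "integrable bandit_space (\<lambda>\<omega>. exp (s * \<omega> 0))"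
    and "integral\<^sup>L bandit_space (\<lambda>\<omega>. exp (s * \<omega> 0)) = exp (s^2/2)"
  by (subst transfer; simp add: mgf_pt)+

lemma mean:
  shows "integrable bandit_space (\<lambda>\<omega>. \<omega> 0)"
    and "integral\<^sup>L bandit_space (\<lambda>\<omega>. \<omega> 0) = 0"
    and "integrable bandit_space (\<lambda>\<omega>. \<bar>\<omega> 0\<bar>)"
  using transfer[of "\<lambda>x. x"] transfer[of "\<lambda>x. \<bar>x\<bar>"] integrable_std_normal_moment[of 1]
    integral_std_normal_moment_odd[of 0] integrable_std_normal_moment_abs[of 1] by auto

lemma hist_sub: "sets (history \<mu> \<sigma> \<sigma>W t) \<subseteq> sets bandit_space"
  unfolding history_def
  by (rule sets_image_in_sets) (auto simp: reward_def arm_quality_def intro!: measurable_restrict)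

lemma tau_sets:
  assumes "admissible_stopping_time \<mu> \<sigma> \<sigma>W \<tau>"
  shows "{\<omega>\<in>space bandit_space. enat t \<le> \<tau> \<omega>} \<in> sets bandit_space"
proof (cases t)
  case 0 then show ?thesis by (simp add: zero_enat_def[symmetric])
next
  case (Suc k)
  have "{\<omega>\<in>space bandit_space. \<tau> \<omega> \<le> enat k} \<in> sets bandit_space"
    using assms hist_sub unfolding admissible_stopping_time_def by blast
  then have "space bandit_space - {\<omega>\<in>space bandit_space. \<tau> \<omega> \<le> enat k} \<in> sets bandit_space"
    by auto
  moreover have "space bandit_space - {\<omega>\<in>space bandit_space. \<tau> \<omega> \<le> enat k} = {\<omega>\<in>space bandit_space. enat t \<le> \<tau> \<omega>}"
    using Suc by (auto simp: Suc_ile_eq)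
  ultimately show ?thesis by simp
qed

definition cc :: "real \<Rightarrow> ((nat \<Rightarrow> real) \<Rightarrow> enat) \<Rightarrow> (nat \<Rightarrow> real) \<Rightarrow> real" where
  "cc \<gamma> \<tau> \<omega> = (\<Sum>t. if enat t \<le> \<tau> \<omega> then \<gamma> ^ t else 0)"

lemma cc_summable:
  fixes \<gamma> :: real
  assumes "0 < \<gamma>" "\<gamma> < 1"
  shows "summable (\<lambda>t. if enat t \<le> \<tau> \<omega> then \<gamma> ^ t else 0)"
  by (rule summable_comparison_test[OF _ summable_geometric[of \<gamma>]]) (use assms in auto)

lemma cc_bounds:
  assumes "0 < \<gamma>" "\<gamma> < 1"
  shows "1 \<le> cc \<gamma> \<tau> \<omega>" "cc \<gamma> \<tau> \<omega> \<le> 1 / (1 - \<gamma>)"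
proof -
  have "sum (\<lambda>t. if enat t \<le> \<tau> \<omega> then \<gamma> ^ t else 0) {0} \<le> cc \<gamma> \<tau> \<omega>"
    unfolding cc_def using assms by (intro sum_le_suminf cc_summable) auto
  then show "1 \<le> cc \<gamma> \<tau> \<omega>" by (simp add: zero_enat_def[symmetric])
  have "cc \<gamma> \<tau> \<omega> \<le> (\<Sum>t. \<gamma> ^ t)"
    unfolding cc_def using assms by (intro suminf_le cc_summable summable_geometric) auto
  also have "\<dots> = 1 / (1 - \<gamma>)" using assms by (simp add: suminf_geometric)
  finally show "cc \<gamma> \<tau> \<omega> \<le> 1 / (1 - \<gamma>)" .
qed

lemma payoff_eq:
  assumes "0 < \<gamma>" "\<gamma> < 1"
  shows "stopped_payoff 0 1 \<gamma> tax \<tau> \<omega> = cc \<gamma> \<tau> \<omega> * (\<omega> 0 - tax)"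
  unfolding stopped_payoff_def cc_def arm_quality_def
  by (subst suminf_mult2[OF cc_summable[OF assms]]) (auto intro!: suminf_cong)

lemma cc_meas:
  assumes "admissible_stopping_time \<mu> \<sigma> \<sigma>W \<tau>"
  shows "cc \<gamma> \<tau> \<in> borel_measurable bandit_space"
proof -
  have p: "Measurable.pred bandit_space (\<lambda>\<omega>. enat t \<le> \<tau> \<omega>)" for t
    unfolding pred_def by (rule tau_sets[OF assms])
  show ?thesis unfolding cc_def[abs_def]
    by (intro borel_measurable_suminf measurable_If p) (auto intro: tau_sets[OF assms])
qed

lemma pt_bound:
  fixes c x s \<gamma> :: real
  assumes "0 < \<gamma>" "\<gamma> < 1" "0 < s" "1 \<le> c" "c \<le> 1 / (1 - \<gamma>)"
  shows "c * x \<le> x + \<gamma> / (1 - \<gamma>) * (exp (s * x - 1) / s)"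
proof -
  have g: "c - 1 \<le> \<gamma> / (1 - \<gamma>)" using assms by (simp add: field_simps)
  have e0: "0 \<le> exp (s * x - 1) / s" using assms by simp
  have q: "0 \<le> \<gamma> / (1 - \<gamma>)" using assms by simp
  show ?thesis
  proof (cases "x \<le> 0")
    case True
    then have "(c - 1) * x \<le> 0" using assms by (simp add: mult_nonneg_nonpos)
    moreover have "0 \<le> \<gamma> / (1 - \<gamma>) * (exp (s * x - 1) / s)" by (rule mult_nonneg_nonneg[OF q e0])
    ultimately show ?thesis by (simp add: algebra_simps)
  next
    case False
    have "s * x \<le> exp (s * x - 1)" using exp_ge_add_one_self[of "s * x - 1"] by simp
    then have xs: "x \<le> exp (s * x - 1) / s" using assms by (simp add: field_simps)
    have "(c - 1) * x \<le> \<gamma> / (1 - \<gamma>) * x" using g False by (intro mult_right_mono) auto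
    also have "\<dots> \<le> \<gamma> / (1 - \<gamma>) * (exp (s * x - 1) / s)" using xs q by (intro mult_left_mono) auto
    finally show ?thesis by (simp add: algebra_simps)
  qed
qed

definition BB :: "real \<Rightarrow> real \<Rightarrow> real \<Rightarrow> real" where
  "BB \<gamma> s tax = - tax + \<gamma> / (1 - \<gamma>) * (exp (s^2/2 - s * tax - 1) / s)"

lemma payoff_integrable_bound:
  assumes adm: "admissible_stopping_time \<mu> \<sigma> \<sigma>W \<tau>" and g: "0 < \<gamma>" "\<gamma> < 1" and s: "0 < s"
  shows "integrable bandit_space (stopped_payoff 0 1 \<gamma> tax \<tau>)"
    and "integral\<^sup>L bandit_space (stopped_payoff 0 1 \<gamma> tax \<tau>) \<le> BB \<gamma> s tax"
proof -
  interpret P: prob_space bandit_space by (rule prob_bandit)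
  have eq: "stopped_payoff 0 1 \<gamma> tax \<tau> = (\<lambda>\<omega>. cc \<gamma> \<tau> \<omega> * (\<omega> 0 - tax))"
    using payoff_eq[OF g] by auto
  have cm[measurable]: "cc \<gamma> \<tau> \<in> borel_measurable bandit_space" by (rule cc_meas[OF adm])
  have i1: "integrable bandit_space (\<lambda>\<omega>. (\<bar>\<omega> 0\<bar> + \<bar>tax\<bar>) / (1 - \<gamma>))"
    using mean(3) by (intro integrable_divide integrable_add) auto
  show int: "integrable bandit_space (stopped_payoff 0 1 \<gamma> tax \<tau>)"
    unfolding eq
  proof (rule Bochner_Integration.integrable_bound[OF i1])
    show "(\<lambda>\<omega>. cc \<gamma> \<tau> \<omega> * (\<omega> 0 - tax)) \<in> borel_measurable bandit_space" by measurable
    show "AE \<omega> in bandit_space. norm (cc \<gamma> \<tau> \<omega> * (\<omega> 0 - tax)) \<le> norm ((\<bar>\<omega> 0\<bar> + \<bar>tax\<bar>) / (1 - \<gamma>))"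
    proof (intro AE_I2)
      fix \<omega>
      have c1: "1 \<le> cc \<gamma> \<tau> \<omega>" and c2: "cc \<gamma> \<tau> \<omega> \<le> 1 / (1 - \<gamma>)" using cc_bounds[OF g] by auto
      have "norm (cc \<gamma> \<tau> \<omega> * (\<omega> 0 - tax)) = cc \<gamma> \<tau> \<omega> * \<bar>\<omega> 0 - tax\<bar>"
        using c1 by (simp add: abs_mult)
      also have "\<dots> \<le> 1 / (1 - \<gamma>) * (\<bar>\<omega> 0\<bar> + \<bar>tax\<bar>)"
        using c1 c2 g by (intro mult_mono) auto
      also have "\<dots> = norm ((\<bar>\<omega> 0\<bar> + \<bar>tax\<bar>) / (1 - \<gamma>))" using g by simp
      finally show "norm (cc \<gamma> \<tau> \<omega> * (\<omega> 0 - tax)) \<le> norm ((\<bar>\<omega> 0\<bar> + \<bar>tax\<bar>) / (1 - \<gamma>))" .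
    qed
  qed
  define R where "R = (\<lambda>\<omega>::nat\<Rightarrow>real. (\<omega> 0 - tax) + \<gamma> / (1 - \<gamma>) * (exp (- s * tax - 1) / s) * exp (s * \<omega> 0))"
  have Rpt: "cc \<gamma> \<tau> \<omega> * (\<omega> 0 - tax) \<le> R \<omega>" for \<omega>
  proof -
    have "cc \<gamma> \<tau> \<omega> * (\<omega> 0 - tax) \<le> (\<omega> 0 - tax) + \<gamma> / (1 - \<gamma>) * (exp (s * (\<omega> 0 - tax) - 1) / s)"
      using cc_bounds[OF g] by (intro pt_bound g s) auto
    also have "exp (s * (\<omega> 0 - tax) - 1) = exp (- s * tax - 1) * exp (s * \<omega> 0)"
      by (simp add: exp_add[symmetric] algebra_simps)
    finally show ?thesis unfolding R_def by simp
  qed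
  have iR: "integrable bandit_space R"
    unfolding R_def using mean(1) mgf(1)[of s]
    by (intro Bochner_Integration.integrable_add Bochner_Integration.integrable_diff integrable_mult_right) auto
  have "integral\<^sup>L bandit_space R = (0 - tax) + \<gamma> / (1 - \<gamma>) * (exp (- s * tax - 1) / s) * exp (s^2/2)"
    unfolding R_def using mean(1,2) mgf[of s]
    by (subst Bochner_Integration.integral_add Bochner_Integration.integral_diff integral_mult_right; (auto simp: P.prob_space intro!: integrable_mult_right Bochner_Integration.integrable_diff)?)+
  also have "\<dots> = BB \<gamma> s tax"
    unfolding BB_def by (simp add: mult_exp_exp algebra_simps)
  finally have IR: "integral\<^sup>L bandit_space R = BB \<gamma> s tax" .
  have "integral\<^sup>L bandit_space (stopped_payoff 0 1 \<gamma> tax \<tau>) \<le> integral\<^sup>L bandit_space R"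
    using int iR Rpt by (intro integral_mono) (auto simp: eq)
  then show "integral\<^sup>L bandit_space (stopped_payoff 0 1 \<gamma> tax \<tau>) \<le> BB \<gamma> s tax" using IR by simp
qed

lemma const1_adm: "admissible_stopping_time \<mu> \<sigma> \<sigma>W (\<lambda>_. 1)"
  unfolding admissible_stopping_time_def
proof (intro conjI allI ballI)
  fix t :: nat
  show "{\<omega> \<in> space bandit_space. (1::enat) \<le> enat t} \<in> sets (history \<mu> \<sigma> \<sigma>W t)"
  proof (cases "t = 0")
    case True then show ?thesis by (simp add: one_enat_def)
  next
    case False
    then have "{\<omega> \<in> space bandit_space. (1::enat) \<le> enat t} = space (history \<mu> \<sigma> \<sigma>W t)"
      by (simp add: history_def one_enat_def)
    then show ?thesis by simp
  qed
qed simp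

lemma const1_int:
  assumes g: "0 < \<gamma>" "\<gamma> < 1"
  shows "integral\<^sup>L bandit_space (stopped_payoff 0 1 \<gamma> 0 (\<lambda>_. 1)) = 0"
proof -
  have "cc \<gamma> (\<lambda>_. 1) \<omega> = 1 + \<gamma>" for \<omega>
  proof -
    have "cc \<gamma> (\<lambda>_. 1) \<omega> = sum (\<lambda>t. if enat t \<le> 1 then \<gamma> ^ t else 0) {0, 1}"
      unfolding cc_def by (rule suminf_finite) (auto simp: one_enat_def)
    then show ?thesis by (simp add: one_enat_def)
  qed
  then have "stopped_payoff 0 1 \<gamma> 0 (\<lambda>_. 1) = (\<lambda>\<omega>. (1 + \<gamma>) * \<omega> 0)"
    using payoff_eq[OF g] by auto
  then show ?thesis using mean(2) by simp
qed

lemma value_le: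
  assumes g: "0 < \<gamma>" "\<gamma> < 1" and s: "0 < s"
  shows "gittins_value \<sigma>W \<gamma> tax 0 1 \<le> BB \<gamma> s tax"
  unfolding gittins_value_def
proof (rule cSup_least)
  show "(\<lambda>\<tau>. integral\<^sup>L bandit_space (stopped_payoff 0 1 \<gamma> tax \<tau>)) ` {\<tau>. admissible_stopping_time 0 1 \<sigma>W \<tau>} \<noteq> {}"
    using const1_adm by blast
qed (use payoff_integrable_bound(2)[OF _ g s] in auto)

lemma value_ge0:
  assumes g: "0 < \<gamma>" "\<gamma> < 1"
  shows "0 \<le> gittins_value \<sigma>W \<gamma> 0 0 1"
  unfolding gittins_value_def
proof (rule cSup_upper2)
  show "integral\<^sup>L bandit_space (stopped_payoff 0 1 \<gamma> 0 (\<lambda>_. 1)) \<in> (\<lambda>\<tau>. integral\<^sup>L bandit_space (stopped_payoff 0 1 \<gamma> 0 \<tau>)) ` {\<tau>. admissible_stopping_time 0 1 \<sigma>W \<tau>}"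
    using const1_adm by blast
  show "bdd_above ((\<lambda>\<tau>. integral\<^sup>L bandit_space (stopped_payoff 0 1 \<gamma> 0 \<tau>)) ` {\<tau>. admissible_stopping_time 0 1 \<sigma>W \<tau>})"
    using payoff_integrable_bound(2)[OF _ g, where s=1 and tax=0] by (intro bdd_aboveI[of _ "BB \<gamma> 1 0"]) auto
qed (simp add: const1_int[OF g])

lemma index_bound:
  assumes g: "0 < \<gamma>" "\<gamma> < 1" and L: "1 - \<gamma> < exp (- 1/2)"
  shows "gittins_index \<sigma>W \<gamma> 0 1 \<le> sqrt (2 * ln (1 / (1 - \<gamma>)))"
  unfolding gittins_index_def
proof (rule cSup_least)
  show "{tax. 0 \<le> gittins_value \<sigma>W \<gamma> tax 0 1} \<noteq> {}" using value_ge0[OF g] by blast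
next
  fix tax assume "tax \<in> {tax. 0 \<le> gittins_value \<sigma>W \<gamma> tax 0 1}"
  then have v: "0 \<le> gittins_value \<sigma>W \<gamma> tax 0 1" by simp
  define Lg where "Lg = ln (1 / (1 - \<gamma>))"
  have Lg: "Lg = - ln (1 - \<gamma>)" unfolding Lg_def using g by (simp add: ln_div)
  have "ln (1 - \<gamma>) < - 1/2" using L g by (metis diff_gt_0_iff_gt ln_less_cancel_iff ln_exp exp_gt_zero)
  then have L2: "1 \<le> 2 * Lg" using Lg by simp
  show "tax \<le> sqrt (2 * ln (1 / (1 - \<gamma>)))"
  proof (rule ccontr)
    assume "\<not> tax \<le> sqrt (2 * ln (1 / (1 - \<gamma>)))"
    then have t: "sqrt (2 * Lg) < tax" unfolding Lg_def by simp
    have s1: "1 \<le> sqrt (2 * Lg)" using L2 by simp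
    have t1: "1 < tax" using t s1 by linarith
    have "(sqrt (2 * Lg))^2 < tax^2" using t L2 by (intro power_strict_mono) auto
    then have t2: "2 * Lg < tax^2" using L2 by simp
    have "exp (- (tax^2)/2) < exp (- Lg)" using t2 by simp
    also have "exp (- Lg) = 1 - \<gamma>" using Lg g by simp
    finally have e: "exp (- (tax^2)/2) < 1 - \<gamma>" .
    have "BB \<gamma> tax tax = - tax + \<gamma> / (1 - \<gamma>) * (exp (- (tax^2)/2) * exp (- 1) / tax)"
      unfolding BB_def by (simp add: mult_exp_exp power2_eq_square)
    also have "\<gamma> / (1 - \<gamma>) * (exp (- (tax^2)/2) * exp (- 1) / tax) \<le> \<gamma> / (1 - \<gamma>) * ((1 - \<gamma>) * 1 / tax)"
      using g t1 e by (intro mult_left_mono divide_right_mono mult_mono) auto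
    also have "\<gamma> / (1 - \<gamma>) * ((1 - \<gamma>) * 1 / tax) = \<gamma> / tax" using g by simp
    also have "\<gamma> / tax < 1" using g t1 by simp
    finally have "BB \<gamma> tax tax < 0" using t1 by simp
    moreover have "gittins_value \<sigma>W \<gamma> tax 0 1 \<le> BB \<gamma> tax tax" using value_le[OF g] t1 by simp
    ultimately show False using v by simp
  qed
qed

theorem lemma4:
  fixes \<sigma>W :: real
  assumes "\<sigma>W > 0"
  shows "\<exists>e :: real \<Rightarrow> real. (e \<longlongrightarrow> 0) (at_left 1) \<and>
           (\<forall>\<^sub>F \<gamma> in at_left 1.
              gittins_index \<sigma>W \<gamma> 0 1 \<le> sqrt (2 * ln (1 / (1 - \<gamma>))) + e \<gamma>)"
proof (intro exI[of _ "\<lambda>_. 0"] conjI)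
  show "((\<lambda>_. 0::real) \<longlongrightarrow> 0) (at_left 1)" by simp
  have e1: "exp (- (1/2)::real) < 1" by simp
  have "max 0 (1 - exp (- 1/2)) < (1::real)" by simp
  then have "\<forall>\<^sub>F \<gamma> in at_left 1. \<gamma> \<in> {max 0 (1 - exp (- 1/2))<..<(1::real)}"
    by (rule eventually_at_left_real)
  then show "\<forall>\<^sub>F \<gamma> in at_left 1. gittins_index \<sigma>W \<gamma> 0 1 \<le> sqrt (2 * ln (1 / (1 - \<gamma>))) + 0"
  proof eventually_elim
    case (elim \<gamma>)
    then have a0: "max 0 (1 - exp (- 1/2)) < \<gamma>" "\<gamma> < 1" by auto
    then have a: "0 < \<gamma>" "1 - exp (- 1/2) < \<gamma>" "\<gamma> < 1" unfolding max_less_iff_conj by auto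
    have "1 - \<gamma> < exp (- 1/2)" using a by linarith
    then show ?case using index_bound[OF a(1,3)] by simp
  qed
qed

end
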